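(* Let $d$ be a positive integer and let $p\in(0,1]$. Asymptotically almost surely as $n\to\infty$, the diameter of the random-surfer Webgraph model with $n$ vertices and parameters $p$ and $d$ is at most $8e^p(\log n)/p$.
   Context: For $p\in(0,1]$, $\mathrm{Geo}(p)$ denotes a geometric random variable with $\Pr[\mathrm{Geo}(p)=k]=(1-p)^kp$ for every integer $k\ge 0$. The random-surfer Webgraph model with parameters $d$ and $p$ is the random directed rooted $n$-vertex multigraph generated as follows: start with a single vertex $v_0$ (the root) with $d$ self-loops; at each step $s$, $1\le s\le n-1$, a new vertex $v_s$ appears and $d$ edges are created from $v_s$ to vertices in $\{v_0,\dots,v_{s-1}\}$ by performing the following procedure $d$ times independently: choose a vertex $u$ uniformly at random from $\{v_0,\dots,v_{s-1}\}$ and a fresh random variable $X=\mathrm{Geo}(p)$, perform a simple random walk of length $X$ starting from $u$ (following out-edges, choosing uniformly among out-edges counted with multiplicity), and join $v_s$ to the last vertex of the walk. The diameter of a directed graph is the maximum shortest-path distance between two vertices in its underlying undirected graph. "Asymptotically almost surely" (a.a.s.) means with probability tending to $1$ as $n\to\infty$. $\log$ is the natural logarithm. *)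

theory Defs
  imports "HOL-Probability.Probability"
begin

text \<open>A directed rooted multigraph on vertices 0..length G - 1 is represented as a list
  G of out-neighbour lists: G ! v is the list (with multiplicity) of heads of the
  out-edges of vertex v.\<close>

definition walk_step :: "nat list list \<Rightarrow> nat \<Rightarrow> nat pmf" where
  "walk_step G u = map_pmf (\<lambda>j. G ! u ! j) (pmf_of_set {..<length (G ! u)})"

fun walk_end :: "nat list list \<Rightarrow> nat \<Rightarrow> nat \<Rightarrow> nat pmf" where
  "walk_end G u 0 = return_pmf u"
| "walk_end G u (Suc k) = bind_pmf (walk_step G u) (\<lambda>w. walk_end G w k)"

definition surfer_target :: "real \<Rightarrow> nat list list \<Rightarrow> nat pmf" where
  "surfer_target p G =
     bind_pmf (pmf_of_set {..<length G}) (\<lambda>u.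
     bind_pmf (geometric_pmf p) (\<lambda>X. walk_end G u X))"

fun iid_list :: "nat \<Rightarrow> 'a pmf \<Rightarrow> 'a list pmf" where
  "iid_list 0 D = return_pmf []"
| "iid_list (Suc k) D = bind_pmf D (\<lambda>x. bind_pmf (iid_list k D) (\<lambda>xs. return_pmf (x # xs)))"

text \<open>webgraph_steps d p s: the graph after s steps, i.e. with s+1 vertices.\<close>
fun webgraph_steps :: "nat \<Rightarrow> real \<Rightarrow> nat \<Rightarrow> nat list list pmf" where
  "webgraph_steps d p 0 = return_pmf [replicate d 0]"
| "webgraph_steps d p (Suc s) =
     bind_pmf (webgraph_steps d p s) (\<lambda>G.
     bind_pmf (iid_list d (surfer_target p G)) (\<lambda>es. return_pmf (G @ [es])))"

definition webgraph :: "nat \<Rightarrow> real \<Rightarrow> nat \<Rightarrow> nat list list pmf" where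
  "webgraph d p n = webgraph_steps d p (n - 1)"

definition uedges :: "nat list list \<Rightarrow> (nat \<times> nat) set" where
  "uedges G = {(a, b). a < length G \<and> b < length G \<and>
                       (b \<in> set (G ! a) \<or> a \<in> set (G ! b))}"

definition udist :: "nat list list \<Rightarrow> nat \<Rightarrow> nat \<Rightarrow> nat" where
  "udist G a b = (LEAST k. (a, b) \<in> uedges G ^^ k)"

definition diameter :: "nat list list \<Rightarrow> nat" where
  "diameter G = Max {udist G a b | a b. a < length G \<and> b < length G}"

end

theory Submission
  imports Defs
begin


definition wfg :: "nat \<Rightarrow> nat list list \<Rightarrow> bool" where
  "wfg d G \<longleftrightarrow> length G \<ge> 1 \<and> (\<forall>v<length G. length (G!v) = d \<and>
      (\<forall>w\<in>set (G!v). w < length G \<and> (v > 0 \<longrightarrow> w < v)))"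

lemma udist_le: "(a,b) \<in> uedges G ^^ k \<Longrightarrow> udist G a b \<le> k"
  unfolding udist_def by (rule Least_le)

lemma udist_path: "\<exists>j. (a,b) \<in> uedges G ^^ j \<Longrightarrow> (a,b) \<in> uedges G ^^ udist G a b"
  unfolding udist_def by (rule LeastI_ex)

lemma connected:
  assumes "wfg d G" "0 < d" "v < length G"
  shows "\<exists>j. (v,0) \<in> uedges G ^^ j"
  using assms(3)
proof (induction v rule: less_induct)
  case (less v)
  show ?case
  proof (cases "v = 0")
    case True then show ?thesis by (intro exI[of _ 0]) auto
  next
    case False
    have len: "length (G!v) = d" using assms(1) less.prems by (auto simp: wfg_def)
    then have w: "G!v!0 \<in> set (G!v)" using assms(2) by auto
    then have wl: "G!v!0 < v" "G!v!0 < length G" using assms(1) less.prems False by (auto simp: wfg_def)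
    then obtain j where j: "(G!v!0, 0) \<in> uedges G ^^ j" using less.IH by blast
    have "(v, G!v!0) \<in> uedges G" using w wl less.prems by (auto simp: uedges_def)
    then have "(v,0) \<in> uedges G ^^ Suc j" using j by (rule relpow_Suc_I2)
    then show ?thesis by blast
  qed
qed

lemma dpath: "wfg d G \<Longrightarrow> 0 < d \<Longrightarrow> v < length G \<Longrightarrow> (v,0) \<in> uedges G ^^ udist G v 0"
  by (rule udist_path, rule connected)

lemma uedges_mono: "uedges G \<subseteq> uedges (G @ [es])"
  by (auto simp: uedges_def nth_append)

lemma relpow_mono_set: "(R::('a\<times>'a) set) \<subseteq> S \<Longrightarrow> R ^^ n \<subseteq> S ^^ n"
  by (induction n) (simp_all add: relcomp_mono relpow.simps)

lemma udist_append_le: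
  assumes "wfg d G" "0 < d" "v < length G"
  shows "udist (G @ [es]) v 0 \<le> udist G v 0"
  using dpath[OF assms] relpow_mono_set[OF uedges_mono[where G=G and es=es]] by (intro udist_le) blast

lemma udist_new_le:
  assumes "wfg d G" "0 < d" "es \<noteq> []" "es!0 < length G"
  shows "udist (G @ [es]) (length G) 0 \<le> Suc (udist G (es!0) 0)"
proof -
  have "(es!0, 0) \<in> uedges (G@[es]) ^^ udist G (es!0) 0"
    using dpath[OF assms(1,2,4)] relpow_mono_set[OF uedges_mono[where G=G and es=es]] by blast
  moreover have "(length G, es!0) \<in> uedges (G@[es])"
    using assms(3,4) by (auto simp: uedges_def nth_append)
  ultimately show ?thesis by (intro udist_le relpow_Suc_I2)
qed

lemma walk_step_set: assumes "G!u \<noteq> []" shows "set_pmf (walk_step G u) = set (G!u)"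
proof -
  have "set_pmf (pmf_of_set {..<length (G!u)}) = {..<length (G!u)}" using assms by (intro set_pmf_of_set) auto
  then show ?thesis by (auto simp: walk_step_def set_conv_nth)
qed

lemma walk_lemma:
  assumes "wfg d G" "0 < d" "u < length G" "t \<in> set_pmf (walk_end G u X)"
  shows "t < length G \<and> udist G t 0 \<le> X + udist G u 0"
  using assms(3,4)
proof (induction X arbitrary: u)
  case 0 then show ?case by simp
next
  case (Suc k)
  have ne: "G!u \<noteq> []" using assms(1,2) Suc.prems by (auto simp: wfg_def)
  from Suc.prems obtain w where w: "w \<in> set (G!u)" and t: "t \<in> set_pmf (walk_end G w k)"
    by (auto simp: walk_step_set[OF ne])
  have wl: "w < length G" using w assms(1) Suc.prems by (auto simp: wfg_def)
  from Suc.IH[OF wl t] have ih: "t < length G" "udist G t 0 \<le> k + udist G w 0" by auto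
  have "(w,u) \<in> uedges G" using w wl Suc.prems by (auto simp: uedges_def)
  then have "(w,0) \<in> uedges G ^^ Suc (udist G u 0)"
    using dpath[OF assms(1,2) Suc.prems(1)] by (rule relpow_Suc_I2)
  then have "udist G w 0 \<le> Suc (udist G u 0)" by (rule udist_le)
  then show ?case using ih by simp
qed

lemma surfer_set:
  assumes "wfg d G" "0 < d" "x \<in> set_pmf (surfer_target p G)" "0 < p" "p \<le> 1"
  shows "x < length G"
proof -
  have "0 < length G" using assms(1) unfolding wfg_def by linarith
  then have ne: "{..<length G} \<noteq> {}" by auto
  from assms(3) obtain u X where "u < length G" "x \<in> set_pmf (walk_end G u X)"
    by (auto simp: surfer_target_def ne)
  then show ?thesis using walk_lemma[OF assms(1,2)] by blast
qed

lemma iid_set: "es \<in> set_pmf (iid_list k D) \<Longrightarrow> length es = k \<and> set es \<subseteq> set_pmf D"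
  by (induction k arbitrary: es) fastforce+

lemma webgraph_wf:
  assumes "0 < d" "0 < p" "p \<le> 1"
  shows "G \<in> set_pmf (webgraph_steps d p s) \<Longrightarrow> wfg d G \<and> length G = Suc s"
proof (induction s arbitrary: G)
  case 0 then show ?case by (auto simp: wfg_def)
next
  case (Suc s)
  from Suc.prems obtain H es where H: "H \<in> set_pmf (webgraph_steps d p s)"
    and es: "es \<in> set_pmf (iid_list d (surfer_target p H))" and G: "G = H @ [es]" by auto
  from Suc.IH[OF H] have wH: "wfg d H" "length H = Suc s" by auto
  from iid_set[OF es] have "length es = d" "\<forall>x\<in>set es. x < length H"
    using surfer_set[OF wH(1) assms(1) _ assms(2,3)] by auto
  then have es': "length es = d" "\<And>x. x \<in> set es \<Longrightarrow> x < length H" by auto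
  have "\<forall>v<length G. length (G!v) = d \<and> (\<forall>w\<in>set (G!v). w < length G \<and> (v > 0 \<longrightarrow> w < v))"
  proof (intro allI impI)
    fix v assume v: "v < length G"
    show "length (G!v) = d \<and> (\<forall>w\<in>set (G!v). w < length G \<and> (v > 0 \<longrightarrow> w < v))"
    proof (cases "v < length H")
      case True
      then have "G!v = H!v" unfolding G by (simp add: nth_append)
      moreover have "length G = Suc (length H)" unfolding G by simp
      moreover have "length (H!v) = d \<and> (\<forall>w\<in>set (H!v). w < length H \<and> (v > 0 \<longrightarrow> w < v))"
        using wH(1) True unfolding wfg_def by blast
      ultimately show ?thesis by (auto intro: less_SucI)
    next
      case False
      then have "v = length H" using v G by simp
      then have Ge: "G!v = es" unfolding G by simp
      have lenG: "length G = Suc (length H)" unfolding G by simp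
      have "0 < length H" using wH(2) by simp
      have "\<forall>w\<in>set es. w < length G \<and> (v > 0 \<longrightarrow> w < v)"
      proof
        fix w assume "w \<in> set es"
        then have "w < length H" by (rule es'(2))
        then show "w < length G \<and> (v > 0 \<longrightarrow> w < v)" using lenG \<open>v = length H\<close> by simp
      qed
      then show ?thesis using Ge es'(1) by simp
    qed
  qed
  moreover have "length G = Suc (Suc s)" using wH(2) G by simp
  ultimately show ?case unfolding wfg_def by simp
qed



definition zz :: "real \<Rightarrow> real" where "zz p = 2 / (2 - p)"
definition Phi :: "real \<Rightarrow> nat list list \<Rightarrow> real" where
  "Phi p G = (\<Sum>v<length G. zz p ^ udist G v 0)"

lemma zz_ge1: "0 < p \<Longrightarrow> p \<le> 1 \<Longrightarrow> 1 \<le> zz p"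
  by (simp add: zz_def field_simps)

lemma Phi_nonneg: "0 < p \<Longrightarrow> p \<le> 1 \<Longrightarrow> 0 \<le> Phi p G"
  using zz_ge1[of p] by (auto simp: Phi_def intro!: sum_nonneg)

lemma Phi_append:
  assumes "wfg d G" "0 < d" "0 < p" "p \<le> 1" "es \<noteq> []" "es!0 < length G"
  shows "Phi p (G @ [es]) \<le> Phi p G + zz p * zz p ^ udist G (es!0) 0"
proof -
  have z: "1 \<le> zz p" using zz_ge1 assms by auto
  have "Phi p (G @ [es]) = (\<Sum>v<length G. zz p ^ udist (G@[es]) v 0) + zz p ^ udist (G@[es]) (length G) 0"
    by (simp add: Phi_def)
  also have "\<dots> \<le> Phi p G + zz p * zz p ^ udist G (es!0) 0"
  proof (rule add_mono)
    show "(\<Sum>v<length G. zz p ^ udist (G@[es]) v 0) \<le> Phi p G"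
      unfolding Phi_def using udist_append_le[OF assms(1,2)] z
      by (intro sum_mono power_increasing) auto
    have "zz p ^ udist (G@[es]) (length G) 0 \<le> zz p ^ Suc (udist G (es!0) 0)"
      using udist_new_le[OF assms(1,2,5,6)] z by (intro power_increasing) auto
    then show "zz p ^ udist (G@[es]) (length G) 0 \<le> zz p * zz p ^ udist G (es!0) 0" by simp
  qed
  finally show ?thesis .
qed

lemma iid_hd:
  "(\<integral>\<^sup>+es. f (es!0) \<partial>measure_pmf (iid_list (Suc k) D)) = (\<integral>\<^sup>+x. f x \<partial>measure_pmf D)"
proof -
  have "(\<integral>\<^sup>+es. f (es!0) \<partial>measure_pmf (iid_list (Suc k) D)) =
        (\<integral>\<^sup>+x. (\<integral>\<^sup>+xs. f x \<partial>measure_pmf (iid_list k D)) \<partial>measure_pmf D)"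
    by simp
  also have "\<dots> = (\<integral>\<^sup>+x. f x \<partial>measure_pmf D)"
    by (simp add: measure_pmf.emeasure_space_1)
  finally show ?thesis .
qed

lemma geo_int:
  assumes "0 < p" "p \<le> 1"
  shows "(\<integral>\<^sup>+X. ennreal (zz p ^ X) \<partial>measure_pmf (geometric_pmf p)) = ennreal (2 - p)"
proof -
  have q: "\<bar>(1-p) * zz p\<bar> < 1" using assms by (auto simp: zz_def field_simps abs_if)
  have "(\<lambda>X. p * ((1-p) * zz p) ^ X) sums (p * (1 / (1 - (1-p) * zz p)))"
    by (intro sums_mult geometric_sums) (use q in simp)
  moreover have "p * (1 / (1 - (1-p) * zz p)) = 2 - p" using assms by (simp add: zz_def field_simps)
  ultimately have s: "(\<lambda>X. (1 - p)^X * p * zz p ^ X) sums (2 - p)"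
    by (simp add: power_mult_distrib mult_ac)
  have "(\<integral>\<^sup>+X. ennreal (zz p ^ X) \<partial>measure_pmf (geometric_pmf p)) =
        (\<integral>\<^sup>+X. ennreal ((1 - p)^X * p * zz p ^ X) \<partial>count_space UNIV)"
    using assms zz_ge1[OF assms] by (simp add: nn_integral_measure_pmf, intro nn_integral_cong) (simp add: ennreal_mult[symmetric])
  also have "\<dots> = (\<Sum>X. ennreal ((1 - p)^X * p * zz p ^ X))"
    by (simp add: nn_integral_count_space_nat)
  also have "\<dots> = ennreal (2 - p)"
    using s assms zz_ge1[OF assms] by (intro suminf_ennreal_eq) auto
  finally show ?thesis .
qed



lemma surfer_int:
  assumes "wfg d G" "0 < d" "0 < p" "p \<le> 1"
  shows "(\<integral>\<^sup>+x. ennreal (zz p ^ udist G x 0) \<partial>measure_pmf (surfer_target p G))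
          \<le> ennreal ((2 - p) / length G * Phi p G)"
proof -
  let ?n = "length G"
  have z: "1 \<le> zz p" using zz_ge1 assms by auto
  have npos: "0 < ?n" using assms(1) unfolding wfg_def by linarith
  have ne: "{..<?n} \<noteq> {}" using npos by auto
  have inner: "(\<integral>\<^sup>+X. \<integral>\<^sup>+t. ennreal (zz p ^ udist G t 0) \<partial>measure_pmf (walk_end G u X) \<partial>measure_pmf (geometric_pmf p))
      \<le> ennreal ((2 - p) * zz p ^ udist G u 0)" if u: "u < ?n" for u
  proof -
    have "(\<integral>\<^sup>+X. \<integral>\<^sup>+t. ennreal (zz p ^ udist G t 0) \<partial>measure_pmf (walk_end G u X) \<partial>measure_pmf (geometric_pmf p))
        \<le> (\<integral>\<^sup>+X. \<integral>\<^sup>+t. ennreal (zz p ^ udist G u 0 * zz p ^ X) \<partial>measure_pmf (walk_end G u X) \<partial>measure_pmf (geometric_pmf p))"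
    proof (rule nn_integral_mono)
      fix X
      have pt: "ennreal (zz p ^ udist G t 0) \<le> ennreal (zz p ^ udist G u 0 * zz p ^ X)"
        if t: "t \<in> set_pmf (walk_end G u X)" for t
      proof -
        from walk_lemma[OF assms(1,2) u t] have "udist G t 0 \<le> X + udist G u 0" by auto
        then have "zz p ^ udist G t 0 \<le> zz p ^ (X + udist G u 0)" using z by (intro power_increasing) auto
        then show ?thesis by (intro ennreal_leI) (simp add: power_add mult_ac)
      qed
      show "(\<integral>\<^sup>+t. ennreal (zz p ^ udist G t 0) \<partial>measure_pmf (walk_end G u X))
         \<le> (\<integral>\<^sup>+t. ennreal (zz p ^ udist G u 0 * zz p ^ X) \<partial>measure_pmf (walk_end G u X))"
        using pt by (intro nn_integral_mono_AE) (auto simp: AE_measure_pmf_iff)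
    qed
    also have "\<dots> = (\<integral>\<^sup>+X. ennreal (zz p ^ udist G u 0) * ennreal (zz p ^ X) \<partial>measure_pmf (geometric_pmf p))"
      using z by (simp add: measure_pmf.emeasure_space_1 ennreal_mult)
    also have "\<dots> = ennreal (zz p ^ udist G u 0) * ennreal (2 - p)"
      by (simp add: nn_integral_cmult geo_int[OF assms(3,4)])
    also have "\<dots> = ennreal ((2 - p) * zz p ^ udist G u 0)"
      using assms z by (simp add: ennreal_mult[symmetric] mult_ac)
    finally show ?thesis .
  qed
  have "(\<integral>\<^sup>+x. ennreal (zz p ^ udist G x 0) \<partial>measure_pmf (surfer_target p G)) =
     (\<integral>\<^sup>+u. (\<integral>\<^sup>+X. \<integral>\<^sup>+t. ennreal (zz p ^ udist G t 0) \<partial>measure_pmf (walk_end G u X) \<partial>measure_pmf (geometric_pmf p)) \<partial>measure_pmf (pmf_of_set {..<?n}))"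
    by (simp add: surfer_target_def)
  also have "\<dots> \<le> (\<integral>\<^sup>+u. ennreal ((2 - p) * zz p ^ udist G u 0) \<partial>measure_pmf (pmf_of_set {..<?n}))"
    using inner ne by (intro nn_integral_mono_AE) (auto simp: AE_measure_pmf_iff)
  also have "\<dots> = (\<Sum>u<?n. ennreal ((2 - p) * zz p ^ udist G u 0)) / ?n"
    using ne by (simp add: nn_integral_pmf_of_set)
  also have "\<dots> = ennreal ((\<Sum>u<?n. (2 - p) * zz p ^ udist G u 0) / ?n)"
  proof -
    have sn: "0 \<le> (\<Sum>u<?n. (2 - p) * zz p ^ udist G u 0)" using assms z by (auto intro!: sum_nonneg)
    have "(\<Sum>u<?n. ennreal ((2 - p) * zz p ^ udist G u 0)) = ennreal (\<Sum>u<?n. (2 - p) * zz p ^ udist G u 0)"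
      using assms z by (subst sum_ennreal) auto
    then show ?thesis using npos by (simp add: ennreal_of_nat_eq_real_of_nat divide_ennreal[OF sn])
  qed
  also have "\<dots> = ennreal ((2 - p) / length G * Phi p G)"
    by (simp add: Phi_def sum_distrib_left[symmetric])
  finally show ?thesis .
qed



lemma step_int:
  assumes "wfg d G" "0 < d" "0 < p" "p \<le> 1"
  shows "(\<integral>\<^sup>+es. ennreal (Phi p (G @ [es])) \<partial>measure_pmf (iid_list d (surfer_target p G)))
          \<le> ennreal ((1 + 2 / length G) * Phi p G)"
proof -
  obtain k where k: "d = Suc k" using assms(2) by (cases d) auto
  have z: "1 \<le> zz p" using zz_ge1 assms by auto
  have P: "0 \<le> Phi p G" using Phi_nonneg assms by auto
  have "(\<integral>\<^sup>+es. ennreal (Phi p (G @ [es])) \<partial>measure_pmf (iid_list d (surfer_target p G)))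
     \<le> (\<integral>\<^sup>+es. ennreal (Phi p G) + ennreal (zz p) * ennreal (zz p ^ udist G (es!0) 0) \<partial>measure_pmf (iid_list d (surfer_target p G)))"
  proof (intro nn_integral_mono_AE, unfold AE_measure_pmf_iff, intro ballI)
    fix es assume es: "es \<in> set_pmf (iid_list d (surfer_target p G))"
    from iid_set[OF es] have "length es = d" "set es \<subseteq> set_pmf (surfer_target p G)" by auto
    then have ne: "es \<noteq> []" and lt: "es!0 < length G"
      using assms(2) surfer_set[OF assms(1,2) _ assms(3,4)] by (auto simp: nth_mem subset_iff)
    have "Phi p (G @ [es]) \<le> Phi p G + zz p * zz p ^ udist G (es!0) 0"
      by (rule Phi_append[OF assms ne lt])
    then show "ennreal (Phi p (G @ [es])) \<le> ennreal (Phi p G) + ennreal (zz p) * ennreal (zz p ^ udist G (es!0) 0)"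
      using P z by (simp add: ennreal_mult[symmetric] ennreal_plus[symmetric] ennreal_leI del: ennreal_plus)
  qed
  also have "\<dots> = ennreal (Phi p G) + ennreal (zz p) * (\<integral>\<^sup>+es. ennreal (zz p ^ udist G (es!0) 0) \<partial>measure_pmf (iid_list d (surfer_target p G)))"
    by (simp add: nn_integral_add nn_integral_cmult measure_pmf.emeasure_space_1)
  also have "\<dots> = ennreal (Phi p G) + ennreal (zz p) * (\<integral>\<^sup>+x. ennreal (zz p ^ udist G x 0) \<partial>measure_pmf (surfer_target p G))"
    unfolding k using iid_hd[where f="\<lambda>x. ennreal (zz p ^ udist G x 0)" and k=k and D="surfer_target p G"] by simp
  also have "\<dots> \<le> ennreal (Phi p G) + ennreal (zz p) * ennreal ((2 - p) / length G * Phi p G)"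
    by (intro add_mono mult_left_mono surfer_int[OF assms]) auto
  also have "\<dots> = ennreal ((1 + 2 / length G) * Phi p G)"
  proof -
    have zz2: "zz p * (2 - p) = 2" using assms by (simp add: zz_def field_simps)
    have X: "0 \<le> (2 - p) / length G * Phi p G" using P assms by auto
    have "ennreal (zz p) * ennreal ((2 - p) / length G * Phi p G) = ennreal (zz p * ((2 - p) / length G * Phi p G))"
      using z X by (intro ennreal_mult[symmetric]) auto
    also have "zz p * ((2 - p) / length G * Phi p G) = 2 / length G * Phi p G"
    proof -
      have "zz p * ((2 - p) / length G * Phi p G) = (zz p * (2 - p)) * (Phi p G / length G)" by simp
      then show ?thesis unfolding zz2 by simp
    qed
    finally have e: "ennreal (zz p) * ennreal ((2 - p) / length G * Phi p G) = ennreal (2 / length G * Phi p G)" .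
    have "ennreal (Phi p G) + ennreal (2 / length G * Phi p G) = ennreal (Phi p G + 2 / length G * Phi p G)"
      using P by (simp add: ennreal_plus)
    then show ?thesis unfolding e by (simp add: distrib_right)
  qed
  finally show ?thesis .
qed

lemma expect_bound:
  assumes "0 < d" "0 < p" "p \<le> 1"
  shows "(\<integral>\<^sup>+G. ennreal (Phi p G) \<partial>measure_pmf (webgraph_steps d p s)) \<le> ennreal ((real s+1)*(real s+2)/2)"
proof (induction s)
  case 0
  have "udist [replicate d 0] 0 0 = 0" by (intro le_0_eq[THEN iffD1] udist_le) simp
  then show ?case by (simp add: Phi_def)
next
  case (Suc s)
  have "(\<integral>\<^sup>+G. ennreal (Phi p G) \<partial>measure_pmf (webgraph_steps d p (Suc s))) =
    (\<integral>\<^sup>+H. (\<integral>\<^sup>+es. ennreal (Phi p (H @ [es])) \<partial>measure_pmf (iid_list d (surfer_target p H))) \<partial>measure_pmf (webgraph_steps d p s))"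
    by simp
  also have "\<dots> \<le> (\<integral>\<^sup>+H. ennreal ((1 + 2 / (s+1)) * Phi p H) \<partial>measure_pmf (webgraph_steps d p s))"
  proof (intro nn_integral_mono_AE, unfold AE_measure_pmf_iff, intro ballI)
    fix H assume "H \<in> set_pmf (webgraph_steps d p s)"
    from webgraph_wf[OF assms this] have "wfg d H" "length H = Suc s" by auto
    note st = step_int[OF \<open>wfg d H\<close> assms]
    then show "(\<integral>\<^sup>+es. ennreal (Phi p (H @ [es])) \<partial>measure_pmf (iid_list d (surfer_target p H)))
        \<le> ennreal ((1 + 2 / (s+1)) * Phi p H)"
      using \<open>length H = Suc s\<close> by (simp add: add.commute)
  qed
  also have "\<dots> = ennreal (1 + 2 / (s+1)) * (\<integral>\<^sup>+H. ennreal (Phi p H) \<partial>measure_pmf (webgraph_steps d p s))"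
    using Phi_nonneg[OF assms(2,3)]
    by (simp add: ennreal_mult nn_integral_cmult)
  also have "\<dots> \<le> ennreal (1 + 2 / (s+1)) * ennreal ((real s+1)*(real s+2)/2)"
    using Suc.IH by (rule mult_left_mono) simp
  also have "\<dots> = ennreal ((real (Suc s) + 1) * (real (Suc s) + 2) / 2)"
  proof -
    have a: "ennreal (1 + 2 / real (s+1)) * ennreal ((real s+1)*(real s+2)/2) = ennreal ((1 + 2 / real (s+1)) * ((real s+1)*(real s+2)/2))"
      by (intro ennreal_mult[symmetric]) auto
    have "(1 + 2 / real (s+1)) * ((real s+1)*(real s+2)/2) = (real (Suc s) + 1) * (real (Suc s) + 2) / 2"
      by (simp add: field_simps)
    then show ?thesis using a by simp
  qed
  finally show ?case .
qed



lemma markov: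
  fixes M :: "'a pmf"
  assumes "(\<integral>\<^sup>+x. ennreal (f x) \<partial>measure_pmf M) \<le> ennreal B" "0 < c" "0 \<le> B"
  shows "measure_pmf.prob M {x. c \<le> f x} \<le> B / c"
proof -
  let ?A = "{x. c \<le> f x}"
  have "ennreal c * emeasure (measure_pmf M) ?A = (\<integral>\<^sup>+x. ennreal c * indicator ?A x \<partial>measure_pmf M)"
    by (simp add: nn_integral_cmult_indicator)
  also have "\<dots> \<le> (\<integral>\<^sup>+x. ennreal (f x) \<partial>measure_pmf M)"
    by (intro nn_integral_mono) (auto split: split_indicator intro: ennreal_leI)
  also have "\<dots> \<le> ennreal B" by fact
  finally have "ennreal (c * measure_pmf.prob M ?A) \<le> ennreal B"
    using assms(2) by (simp add: measure_pmf.emeasure_eq_measure ennreal_mult)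
  then have "c * measure_pmf.prob M ?A \<le> B" using assms(3) by (simp add: ennreal_le_iff)
  then show ?thesis using assms(2) by (simp add: field_simps mult.commute)
qed

lemma relpow_sym:
  assumes "\<And>u v. (u,v) \<in> R \<Longrightarrow> (v,u) \<in> R"
  shows "(x,y) \<in> R ^^ n \<Longrightarrow> (y,x) \<in> R ^^ n"
proof (induction n arbitrary: y)
  case 0 then show ?case by simp
next
  case (Suc n)
  from Suc.prems obtain w where "(x,w) \<in> R ^^ n" "(w,y) \<in> R" by auto
  then have "(w,x) \<in> R ^^ n" "(y,w) \<in> R" using Suc.IH assms by auto
  then show ?case by (rule relpow_Suc_I2[rotated])
qed

lemma diameter_le:
  assumes "wfg d G" "0 < d" "\<And>v. v < length G \<Longrightarrow> real (udist G v 0) \<le> R"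
  shows "real (diameter G) \<le> 2 * R"
proof -
  let ?S = "{udist G a b | a b. a < length G \<and> b < length G}"
  have S: "?S = (\<lambda>(a,b). udist G a b) ` ({..<length G} \<times> {..<length G})" by auto
  have fin: "finite ?S" unfolding S by auto
  have "0 < length G" using assms(1) unfolding wfg_def by linarith
  then have ne: "?S \<noteq> {}" by auto
  from Max_in[OF fin ne] obtain a b where ab: "a < length G" "b < length G" "diameter G = udist G a b"
    unfolding diameter_def by auto
  have pa: "(a,0) \<in> uedges G ^^ udist G a 0" by (rule dpath[OF assms(1,2) ab(1)])
  have "(b,0) \<in> uedges G ^^ udist G b 0" by (rule dpath[OF assms(1,2) ab(2)])
  then have pb: "(0,b) \<in> uedges G ^^ udist G b 0"
    by (rule relpow_sym[rotated]) (auto simp: uedges_def)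
  have "(a,b) \<in> uedges G ^^ (udist G a 0 + udist G b 0)"
    using pa pb by (auto simp: relpow_add)
  then have "udist G a b \<le> udist G a 0 + udist G b 0" by (rule udist_le)
  then have "real (diameter G) \<le> real (udist G a 0) + real (udist G b 0)" using ab(3) by simp
  also have "\<dots> \<le> 2 * R" using assms(3)[OF ab(1)] assms(3)[OF ab(2)] by simp
  finally show ?thesis .
qed



lemma ln_zz: assumes "0 < p" "p \<le> 1" shows "p / 2 \<le> ln (zz p)"
proof -
  have zp: "0 < zz p" using zz_ge1[OF assms] by simp
  have e: "1 / zz p = (2 - p) / 2" using assms by (simp add: zz_def)
  have "ln (1 / zz p) \<le> 1 / zz p - 1" using zp by (intro ln_le_minus_one) auto
  moreover have "ln (1 / zz p) = - ln (zz p)" using zp by (simp add: ln_div)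
  ultimately have "- ln (zz p) \<le> (2 - p) / 2 - 1" unfolding e by linarith
  then show ?thesis by (simp add: field_simps)
qed

lemma bad_bound:
  assumes "0 < d" "0 < p" "p \<le> 1" "2 \<le> n"
  shows "measure_pmf.prob (webgraph d p n)
     {G. \<exists>v<length G. 8 * exp p * ln (real n) / p / 2 < real (udist G v 0)}
     \<le> real n powr (2 - 2 * exp p)"
proof -
  define B where "B = 8 * exp p * ln (real n) / p / 2"
  define c where "c = zz p powr B"
  have z: "1 \<le> zz p" using zz_ge1 assms by auto
  have lnn: "0 < ln (real n)" using assms(4) by simp
  have B0: "0 \<le> B" unfolding B_def using assms lnn by auto
  have cpos: "0 < c" unfolding c_def using z by simp
  have sub: "{G. \<exists>v<length G. B < real (udist G v 0)} \<subseteq> {G. c \<le> Phi p G}"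
  proof safe
    fix G v assume v: "v < length G" and lt: "B < real (udist G v 0)"
    have "c \<le> zz p powr real (udist G v 0)" unfolding c_def using lt z by (intro powr_mono) auto
    also have "\<dots> = zz p ^ udist G v 0" using z by (simp add: powr_realpow)
    also have "\<dots> \<le> Phi p G" unfolding Phi_def using v z
      by (intro member_le_sum) auto
    finally show "c \<le> Phi p G" .
  qed
  have n1: "Suc (n - 1) = n" using assms(4) by simp
  have E: "(\<integral>\<^sup>+G. ennreal (Phi p G) \<partial>measure_pmf (webgraph d p n)) \<le> ennreal (real n * (real n + 1) / 2)"
    using expect_bound[OF assms(1,2,3), of "n - 1"] assms(4) by (simp add: webgraph_def of_nat_diff ac_simps)
  have "measure_pmf.prob (webgraph d p n) {G. \<exists>v<length G. B < real (udist G v 0)}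
      \<le> measure_pmf.prob (webgraph d p n) {G. c \<le> Phi p G}"
    by (intro measure_pmf.finite_measure_mono sub) auto
  also have "\<dots> \<le> (real n * (real n + 1) / 2) / c"
    by (rule markov[OF E cpos]) simp
  also have "\<dots> \<le> real n powr 2 / real n powr (2 * exp p)"
  proof (rule frac_le)
    show "0 \<le> real n powr 2" by simp
    have "real n * (real n + 1) / 2 \<le> real n ^ 2" using assms(4) by (simp add: power2_eq_square field_simps)
    then show "real n * (real n + 1) / 2 \<le> real n powr 2" using assms(4) by (simp add: powr_realpow)
    show "0 < real n powr (2 * exp p)" using assms(4) by simp
    have "real n powr (2 * exp p) = exp (2 * exp p * ln (real n))" using assms(4) by (simp add: powr_def)
    also have "\<dots> \<le> exp (ln (zz p) * B)"
    proof -
      have "2 * exp p * ln (real n) = p / 2 * B" unfolding B_def using assms by (simp add: field_simps)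
      also have "\<dots> \<le> ln (zz p) * B" using ln_zz[OF assms(2,3)] B0 by (intro mult_right_mono) auto
      finally show ?thesis by simp
    qed
    also have "\<dots> = c" unfolding c_def using z by (simp add: powr_def)
    finally show "real n powr (2 * exp p) \<le> c" .
  qed
  also have "\<dots> = real n powr (2 - 2 * exp p)" by (simp add: powr_diff)
  finally show ?thesis unfolding B_def .
qed

theorem theorem1:
  fixes d :: nat and p :: real
  assumes "0 < d" and "0 < p" and "p \<le> 1"
  shows "(\<lambda>n. measure_pmf.prob (webgraph d p n)
            {G. real (diameter G) \<le> 8 * exp p * ln (real n) / p}) \<longlonglongrightarrow> 1"
proof (rule tendsto_sandwich[of "\<lambda>n. 1 - real n powr (2 - 2 * exp p)" _ _ "\<lambda>n. 1"])
  have "2 - 2 * exp p < 0" using assms by simp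
  then have "(\<lambda>n. real n powr (2 - 2 * exp p)) \<longlonglongrightarrow> 0"
    by (intro tendsto_neg_powr filterlim_real_sequentially)
  then have "(\<lambda>n. 1 - real n powr (2 - 2 * exp p)) \<longlonglongrightarrow> 1 - 0"
    by (intro tendsto_diff tendsto_const)
  then show "(\<lambda>n. 1 - real n powr (2 - 2 * exp p)) \<longlonglongrightarrow> 1" by simp
  show "(\<lambda>n. 1) \<longlonglongrightarrow> (1::real)" by simp
  show "\<forall>\<^sub>F n in sequentially. measure_pmf.prob (webgraph d p n)
            {G. real (diameter G) \<le> 8 * exp p * ln (real n) / p} \<le> 1"
    by (simp add: measure_pmf.prob_le_1)
  show "\<forall>\<^sub>F n in sequentially. 1 - real n powr (2 - 2 * exp p) \<le> measure_pmf.prob (webgraph d p n)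
            {G. real (diameter G) \<le> 8 * exp p * ln (real n) / p}"
    using eventually_ge_at_top[of 2]
  proof eventually_elim
    case (elim n)
    let ?M = "webgraph d p n"
    let ?good = "{G. real (diameter G) \<le> 8 * exp p * ln (real n) / p}"
    let ?bad = "{G. \<exists>v<length G. 8 * exp p * ln (real n) / p / 2 < real (udist G v 0)}"
    have "set_pmf ?M \<subseteq> ?good \<union> ?bad"
    proof
      fix G assume G: "G \<in> set_pmf ?M"
      have w: "wfg d G" using webgraph_wf[OF assms] G by (auto simp: webgraph_def)
      show "G \<in> ?good \<union> ?bad"
      proof (cases "G \<in> ?bad")
        case False
        then have "\<And>v. v < length G \<Longrightarrow> real (udist G v 0) \<le> 8 * exp p * ln (real n) / p / 2" by auto
        from diameter_le[OF w assms(1) this] show ?thesis by simp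
      qed simp
    qed
    then have "measure_pmf.prob ?M (?good \<union> ?bad) = 1"
      by (subst measure_pmf.prob_eq_1) (auto simp: AE_measure_pmf_iff)
    then have "1 \<le> measure_pmf.prob ?M ?good + measure_pmf.prob ?M ?bad"
      using measure_subadditive[of ?good "measure_pmf ?M" ?bad] by (simp add: measure_pmf.emeasure_eq_measure)
    moreover have "measure_pmf.prob ?M ?bad \<le> real n powr (2 - 2 * exp p)"
      by (rule bad_bound[OF assms elim])
    ultimately show ?case by simp
  qed
qed


end
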